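(* There is no universal first-order sentence $\varphi$ in the language of residuation algebras (and indeed none in the language of residuated lattices) such that for every residuation algebra $\mathbb{A}$ (resp. residuated lattice), $\mathbb{A}\models\varphi$ if and only if the dual structure $\mathbb{A}^\delta_+$ is functional. In particular, the complex algebra $(\mathcal{P}(\mathbb{Z}_3),\cap,\cup,\cdot,\backslash,/,\{0\})$ of the group $\mathbb{Z}_3$ has a functional (indeed total) dual structure, while its subalgebra with universe $\{\emptyset,\{0\},\{1,2\},\mathbb{Z}_3\}$ does not.
   Context: A residuation algebra is a structure $(A,\backslash,/)$ where $A$ is a bounded distributive lattice and $\backslash,/$ are binary operations on $A$ such that $\backslash$ preserves finite (including empty) meets in its second coordinate, $/$ preserves finite (including empty) meets in its first coordinate, and for all $a,b,c\in A$: $b\leq a\backslash c$ iff $a\leq c/b$; its language consists of the bounded lattice operations together with $\backslash$ and $/$. The canonical extension $A^\delta$ of $A$ is the dense and compact completion of $A$ (for finite $A$, $A^\delta=A$). The $\pi$-extensions $\backslash^\pi,/^\pi$ of $\backslash,/$ are defined by: for $k$ a meet of elements of $A$ and $o$ a join of elements of $A$, $k\backslash^\pi o=\bigvee\{a\backslash b\mid a,b\in A, k\leq a, b\leq o\}$, extended to arbitrary $u,v$ by $u\backslash^\pi v=\bigwedge\{k\backslash^\pi o\mid k\leq u, v\leq o\}$, and symmetrically for $/$. The product $\cdot$ on $A^\delta$ is the operation with $v\leq u\backslash^\pi w$ iff $u\cdot v\leq w$ iff $u\leq w/^\pi v$. $J^\infty(A^\delta)$ is the set of completely join-irreducible elements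 of $A^\delta$. $\mathbb{A}^\delta_+$ is functional if $y\cdot z\in J^\infty(A^\delta)\cup\{\bot\}$ for all $y,z\in J^\infty(A^\delta)$, and total if $y\cdot z\in J^\infty(A^\delta)$ for all such $y,z$. In the complex algebra of $\mathbb{Z}_3$: $X\cdot Y=\{x+y\mid x\in X,y\in Y\}$, $X\backslash Y=\{c\mid X\cdot\{c\}\subseteq Y\}$, $X/Y=\{c\mid\{c\}\cdot Y\subseteq X\}$. *)

theory Defs
  imports Main
begin

record 'a ra =
  carrier :: "'a set"
  r_meet :: "'a \<Rightarrow> 'a \<Rightarrow> 'a"
  r_join :: "'a \<Rightarrow> 'a \<Rightarrow> 'a"
  r_bot  :: 'a
  r_top  :: 'a
  r_ldiv :: "'a \<Rightarrow> 'a \<Rightarrow> 'a"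
  r_rdiv :: "'a \<Rightarrow> 'a \<Rightarrow> 'a"

record 'a rl = "'a ra" +
  r_mult :: "'a \<Rightarrow> 'a \<Rightarrow> 'a"
  r_one  :: 'a

definition r_le :: "('a,'b) ra_scheme \<Rightarrow> 'a \<Rightarrow> 'a \<Rightarrow> bool" where
  "r_le A x y \<longleftrightarrow> r_meet A x y = x"

definition bounded_distrib_lattice :: "('a,'b) ra_scheme \<Rightarrow> bool" where
  "bounded_distrib_lattice A \<longleftrightarrow>
     (let C = carrier A; m = r_meet A; j = r_join A in
       r_bot A \<in> C \<and> r_top A \<in> C \<and>
       (\<forall>x\<in>C. \<forall>y\<in>C. m x y \<in> C \<and> j x y \<in> C) \<and>
       (\<forall>x\<in>C. \<forall>y\<in>C. \<forall>z\<in>C. m x (m y z) = m (m x y) z \<and> j x (j y z) = j (j x y) z) \<and>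
       (\<forall>x\<in>C. \<forall>y\<in>C. m x y = m y x \<and> j x y = j y x) \<and>
       (\<forall>x\<in>C. \<forall>y\<in>C. m x (j x y) = x \<and> j x (m x y) = x) \<and>
       (\<forall>x\<in>C. \<forall>y\<in>C. \<forall>z\<in>C. m x (j y z) = j (m x y) (m x z)) \<and>
       (\<forall>x\<in>C. j x (r_bot A) = x \<and> m x (r_top A) = x))"

definition residuation_algebra :: "('a,'b) ra_scheme \<Rightarrow> bool" where
  "residuation_algebra A \<longleftrightarrow>
     bounded_distrib_lattice A \<and>
     (\<forall>x\<in>carrier A. \<forall>y\<in>carrier A. r_ldiv A x y \<in> carrier A \<and> r_rdiv A x y \<in> carrier A) \<and>
     \<comment> \<open>\<open>\<backslash>\<close> preserves finite (incl. empty) meets in its second coordinate\<close>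
     (\<forall>a\<in>carrier A. r_ldiv A a (r_top A) = r_top A) \<and>
     (\<forall>a\<in>carrier A. \<forall>b\<in>carrier A. \<forall>c\<in>carrier A.
        r_ldiv A a (r_meet A b c) = r_meet A (r_ldiv A a b) (r_ldiv A a c)) \<and>
     \<comment> \<open>\<open>/\<close> preserves finite (incl. empty) meets in its first coordinate\<close>
     (\<forall>a\<in>carrier A. r_rdiv A (r_top A) a = r_top A) \<and>
     (\<forall>a\<in>carrier A. \<forall>b\<in>carrier A. \<forall>c\<in>carrier A.
        r_rdiv A (r_meet A b c) a = r_meet A (r_rdiv A b a) (r_rdiv A c a)) \<and>
     \<comment> \<open>residuation law\<close>
     (\<forall>a\<in>carrier A. \<forall>b\<in>carrier A. \<forall>c\<in>carrier A.
        r_le A b (r_ldiv A a c) \<longleftrightarrow> r_le A a (r_rdiv A c b))"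

definition residuated_lattice :: "'a rl \<Rightarrow> bool" where
  "residuated_lattice A \<longleftrightarrow>
     bounded_distrib_lattice A \<and>
     (\<forall>x\<in>carrier A. \<forall>y\<in>carrier A. r_ldiv A x y \<in> carrier A \<and> r_rdiv A x y \<in> carrier A
        \<and> r_mult A x y \<in> carrier A) \<and>
     r_one A \<in> carrier A \<and>
     (\<forall>x\<in>carrier A. \<forall>y\<in>carrier A. \<forall>z\<in>carrier A.
        r_mult A x (r_mult A y z) = r_mult A (r_mult A x y) z) \<and>
     (\<forall>x\<in>carrier A. r_mult A (r_one A) x = x \<and> r_mult A x (r_one A) = x) \<and>
     (\<forall>x\<in>carrier A. \<forall>y\<in>carrier A. \<forall>z\<in>carrier A.
        (r_le A (r_mult A x y) z \<longleftrightarrow> r_le A y (r_ldiv A x z)) \<and>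
        (r_le A (r_mult A x y) z \<longleftrightarrow> r_le A x (r_rdiv A z y)))"

datatype rterm = RVar nat | RBot | RTop | RMeet rterm rterm | RJoin rterm rterm
  | RLdiv rterm rterm | RRdiv rterm rterm

datatype lterm = LVar nat | LBot | LTop | LMeet lterm lterm | LJoin lterm lterm
  | LLdiv lterm lterm | LRdiv lterm lterm | LMult lterm lterm | LOne

text \<open>A universal sentence \<open>\<forall>x\<^sub>1\<dots>x\<^sub>n. \<psi>\<close> is represented by its quantifier-free matrix \<open>\<psi>\<close>,
  all of whose variables are read universally.\<close>
datatype 't qf = Eq 't 't | Neg "'t qf" | Conj "'t qf" "'t qf" | Disj "'t qf" "'t qf"

primrec eval_r :: "('a,'b) ra_scheme \<Rightarrow> (nat \<Rightarrow> 'a) \<Rightarrow> rterm \<Rightarrow> 'a" where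
  "eval_r A \<rho> (RVar n) = \<rho> n"
| "eval_r A \<rho> RBot = r_bot A"
| "eval_r A \<rho> RTop = r_top A"
| "eval_r A \<rho> (RMeet s t) = r_meet A (eval_r A \<rho> s) (eval_r A \<rho> t)"
| "eval_r A \<rho> (RJoin s t) = r_join A (eval_r A \<rho> s) (eval_r A \<rho> t)"
| "eval_r A \<rho> (RLdiv s t) = r_ldiv A (eval_r A \<rho> s) (eval_r A \<rho> t)"
| "eval_r A \<rho> (RRdiv s t) = r_rdiv A (eval_r A \<rho> s) (eval_r A \<rho> t)"

primrec eval_l :: "'a rl \<Rightarrow> (nat \<Rightarrow> 'a) \<Rightarrow> lterm \<Rightarrow> 'a" where
  "eval_l A \<rho> (LVar n) = \<rho> n"
| "eval_l A \<rho> LBot = r_bot A"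
| "eval_l A \<rho> LTop = r_top A"
| "eval_l A \<rho> (LMeet s t) = r_meet A (eval_l A \<rho> s) (eval_l A \<rho> t)"
| "eval_l A \<rho> (LJoin s t) = r_join A (eval_l A \<rho> s) (eval_l A \<rho> t)"
| "eval_l A \<rho> (LLdiv s t) = r_ldiv A (eval_l A \<rho> s) (eval_l A \<rho> t)"
| "eval_l A \<rho> (LRdiv s t) = r_rdiv A (eval_l A \<rho> s) (eval_l A \<rho> t)"
| "eval_l A \<rho> (LMult s t) = r_mult A (eval_l A \<rho> s) (eval_l A \<rho> t)"
| "eval_l A \<rho> LOne = r_one A"

primrec holds :: "('t \<Rightarrow> 'a) \<Rightarrow> 't qf \<Rightarrow> bool" where
  "holds e (Eq s t) = (e s = e t)"
| "holds e (Neg \<phi>) = (\<not> holds e \<phi>)"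
| "holds e (Conj \<phi> \<psi>) = (holds e \<phi> \<and> holds e \<psi>)"
| "holds e (Disj \<phi> \<psi>) = (holds e \<phi> \<or> holds e \<psi>)"

definition models_univ_r :: "('a,'b) ra_scheme \<Rightarrow> rterm qf \<Rightarrow> bool" where
  "models_univ_r A \<phi> \<longleftrightarrow> (\<forall>\<rho>. (\<forall>n. \<rho> n \<in> carrier A) \<longrightarrow> holds (eval_r A \<rho>) \<phi>)"

definition models_univ_l :: "'a rl \<Rightarrow> lterm qf \<Rightarrow> bool" where
  "models_univ_l A \<phi> \<longleftrightarrow> (\<forall>\<rho>. (\<forall>n. \<rho> n \<in> carrier A) \<longrightarrow> holds (eval_l A \<rho>) \<phi>)"

definition prime_filters :: "('a,'b) ra_scheme \<Rightarrow> 'a set set" where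
  "prime_filters A = {F. F \<subseteq> carrier A \<and> r_top A \<in> F \<and> r_bot A \<notin> F \<and>
      (\<forall>x\<in>F. \<forall>y\<in>carrier A. r_le A x y \<longrightarrow> y \<in> F) \<and>
      (\<forall>x\<in>F. \<forall>y\<in>F. r_meet A x y \<in> F) \<and>
      (\<forall>x\<in>carrier A. \<forall>y\<in>carrier A. r_join A x y \<in> F \<longrightarrow> x \<in> F \<or> y \<in> F)}"

text \<open>The canonical extension \<open>A\<^sup>\<delta>\<close> is realised as the complete lattice (ordered by inclusion)
  of up-sets of the poset of prime filters; \<open>A\<close> embeds via \<open>emb\<close>.\<close>
definition cext :: "('a,'b) ra_scheme \<Rightarrow> 'a set set set" where
  "cext A = {U. U \<subseteq> prime_filters A \<and>
      (\<forall>F\<in>U. \<forall>G\<in>prime_filters A. F \<subseteq> G \<longrightarrow> G \<in> U)}"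

definition emb :: "('a,'b) ra_scheme \<Rightarrow> 'a \<Rightarrow> 'a set set" where
  "emb A a = {F \<in> prime_filters A. a \<in> F}"

definition closed_elts :: "('a,'b) ra_scheme \<Rightarrow> 'a set set set" where
  "closed_elts A = {prime_filters A \<inter> (\<Inter>a\<in>S. emb A a) | S. S \<subseteq> carrier A}"

definition open_elts :: "('a,'b) ra_scheme \<Rightarrow> 'a set set set" where
  "open_elts A = {(\<Union>a\<in>S. emb A a) | S. S \<subseteq> carrier A}"

definition ldiv_pi_KO :: "('a,'b) ra_scheme \<Rightarrow> 'a set set \<Rightarrow> 'a set set \<Rightarrow> 'a set set" where
  "ldiv_pi_KO A k op = \<Union>{emb A (r_ldiv A a b) | a b.
      a \<in> carrier A \<and> b \<in> carrier A \<and> k \<subseteq> emb A a \<and> emb A b \<subseteq> op}"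

definition ldiv_pi :: "('a,'b) ra_scheme \<Rightarrow> 'a set set \<Rightarrow> 'a set set \<Rightarrow> 'a set set" where
  "ldiv_pi A u v = prime_filters A \<inter> \<Inter>{ldiv_pi_KO A k op | k op.
      k \<in> closed_elts A \<and> op \<in> open_elts A \<and> k \<subseteq> u \<and> v \<subseteq> op}"

text \<open>The product on \<open>A\<^sup>\<delta>\<close>: the lower adjoint, \<open>u \<cdot> v \<le> w \<longleftrightarrow> v \<le> u \<backslash>\<^sup>\<pi> w\<close>, given by the
  meet of all \<open>w\<close> with \<open>v \<le> u \<backslash>\<^sup>\<pi> w\<close>.\<close>
definition cprod :: "('a,'b) ra_scheme \<Rightarrow> 'a set set \<Rightarrow> 'a set set \<Rightarrow> 'a set set" where
  "cprod A u v = prime_filters A \<inter> \<Inter>{w \<in> cext A. v \<subseteq> ldiv_pi A u w}"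

text \<open>Completely join-irreducible elements of \<open>A\<^sup>\<delta>\<close> (joins are unions, bottom is the empty set).\<close>
definition Jinf :: "('a,'b) ra_scheme \<Rightarrow> 'a set set set" where
  "Jinf A = {j \<in> cext A. j \<noteq> {} \<and> (\<forall>S. S \<subseteq> cext A \<longrightarrow> j = \<Union>S \<longrightarrow> j \<in> S)}"

definition dual_functional :: "('a,'b) ra_scheme \<Rightarrow> bool" where
  "dual_functional A \<longleftrightarrow> (\<forall>y\<in>Jinf A. \<forall>z\<in>Jinf A. cprod A y z \<in> Jinf A \<union> {{}})"

definition dual_total :: "('a,'b) ra_scheme \<Rightarrow> bool" where
  "dual_total A \<longleftrightarrow> (\<forall>y\<in>Jinf A. \<forall>z\<in>Jinf A. cprod A y z \<in> Jinf A)"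

definition Z3 :: "int set" where "Z3 = {0, 1, 2}"

definition cplx_mult :: "int set \<Rightarrow> int set \<Rightarrow> int set" where
  "cplx_mult X Y = {(x + y) mod 3 | x y. x \<in> X \<and> y \<in> Y}"

definition Z3cx :: "int set rl" where
  "Z3cx = \<lparr> carrier = Pow Z3, r_meet = (\<inter>), r_join = (\<union>), r_bot = {}, r_top = Z3,
     r_ldiv = (\<lambda>X Y. {c \<in> Z3. cplx_mult X {c} \<subseteq> Y}),
     r_rdiv = (\<lambda>X Y. {c \<in> Z3. cplx_mult {c} Y \<subseteq> X}),
     r_mult = cplx_mult, r_one = {0} \<rparr>"

definition Z3sub :: "int set rl" where
  "Z3sub = Z3cx \<lparr> carrier := {{}, {0}, {1, 2}, Z3} \<rparr>"

end

theory Submission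
  imports Defs
begin

definition LD :: "int set \<Rightarrow> int set \<Rightarrow> int set" where
  "LD X Y = {c \<in> Z3. cplx_mult X {c} \<subseteq> Y}"
definition RD :: "int set \<Rightarrow> int set \<Rightarrow> int set" where
  "RD X Y = {c \<in> Z3. cplx_mult {c} Y \<subseteq> X}"

definition fok :: "(int set,'b) ra_scheme \<Rightarrow> int set set \<Rightarrow> bool" where
  "fok A C \<longleftrightarrow> carrier A = C \<and> r_meet A = (\<inter>) \<and> r_join A = (\<union>) \<and> r_bot A = {}
     \<and> r_top A = Z3 \<and> r_ldiv A = LD \<and> r_rdiv A = RD"

definition clos :: "int set set \<Rightarrow> bool" where
  "clos C \<longleftrightarrow> C \<subseteq> Pow Z3 \<and> {} \<in> C \<and> Z3 \<in> C \<and> {0} \<in> C \<and>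
     (\<forall>X\<in>C. \<forall>Y\<in>C. X \<inter> Y \<in> C \<and> X \<union> Y \<in> C \<and> LD X Y \<in> C \<and> RD X Y \<in> C \<and> cplx_mult X Y \<in> C)"

lemma mod3_in: "(k::int) mod 3 \<in> Z3"
proof -
  have "0 \<le> k mod 3" "k mod 3 < 3" by auto
  then show ?thesis unfolding Z3_def by auto
qed

lemma M_sub: "cplx_mult X Y \<subseteq> Z3"
  unfolding cplx_mult_def using mod3_in by auto

lemma M_mem: "z \<in> cplx_mult X Y \<longleftrightarrow> (\<exists>x\<in>X. \<exists>y\<in>Y. z = (x + y) mod 3)"
  unfolding cplx_mult_def by auto

lemma M_memI: "x \<in> X \<Longrightarrow> y \<in> Y \<Longrightarrow> z = (x + y) mod 3 \<Longrightarrow> z \<in> cplx_mult X Y"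
  unfolding cplx_mult_def by blast

lemma M_assoc: "cplx_mult X (cplx_mult Y Z) = cplx_mult (cplx_mult X Y) Z"
proof -
  have e1: "\<And>x y u::int. (x + (y + u) mod 3) mod 3 = (x + y + u) mod 3"
    by (simp add: mod_add_right_eq add.assoc)
  have e2: "\<And>x y u::int. ((x + y) mod 3 + u) mod 3 = (x + y + u) mod 3"
    by (simp add: mod_add_left_eq)
  have L: "z \<in> cplx_mult X (cplx_mult Y Z) \<longleftrightarrow> (\<exists>x\<in>X. \<exists>y\<in>Y. \<exists>u\<in>Z. z = (x + y + u) mod 3)" for z
  proof
    assume a: "z \<in> cplx_mult X (cplx_mult Y Z)"
    have "\<exists>x\<in>X. \<exists>w\<in>cplx_mult Y Z. z = (x + w) mod 3" using a by (simp only: M_mem)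
    then obtain x w where 1: "x \<in> X" "w \<in> cplx_mult Y Z" "z = (x + w) mod 3" by blast
    have "\<exists>y\<in>Y. \<exists>u\<in>Z. w = (y + u) mod 3" using 1(2) by (simp only: M_mem)
    then obtain y u where 2: "y \<in> Y" "u \<in> Z" "w = (y + u) mod 3" by blast
    have "z = (x + y + u) mod 3" using 1(3) 2(3) e1 by simp
    then show "\<exists>x\<in>X. \<exists>y\<in>Y. \<exists>u\<in>Z. z = (x + y + u) mod 3" using 1(1) 2(1,2) by blast
  next
    assume "\<exists>x\<in>X. \<exists>y\<in>Y. \<exists>u\<in>Z. z = (x + y + u) mod 3"
    then obtain x y u where 1: "x \<in> X" "y \<in> Y" "u \<in> Z" "z = (x + y + u) mod 3" by blast
    have 3: "(y + u) mod 3 \<in> cplx_mult Y Z" by (rule M_memI[OF 1(2,3) refl])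
    have 4: "z = (x + (y + u) mod 3) mod 3" using 1(4) e1 by simp
    show "z \<in> cplx_mult X (cplx_mult Y Z)" by (rule M_memI[OF 1(1) 3 4])
  qed
  have R: "z \<in> cplx_mult (cplx_mult X Y) Z \<longleftrightarrow> (\<exists>x\<in>X. \<exists>y\<in>Y. \<exists>u\<in>Z. z = (x + y + u) mod 3)" for z
  proof
    assume a: "z \<in> cplx_mult (cplx_mult X Y) Z"
    have "\<exists>w\<in>cplx_mult X Y. \<exists>u\<in>Z. z = (w + u) mod 3" using a by (simp only: M_mem)
    then obtain w u where 1: "w \<in> cplx_mult X Y" "u \<in> Z" "z = (w + u) mod 3" by blast
    have "\<exists>x\<in>X. \<exists>y\<in>Y. w = (x + y) mod 3" using 1(1) by (simp only: M_mem)
    then obtain x y where 2: "x \<in> X" "y \<in> Y" "w = (x + y) mod 3" by blast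
    have "z = (x + y + u) mod 3" using 1(3) 2(3) e2 by simp
    then show "\<exists>x\<in>X. \<exists>y\<in>Y. \<exists>u\<in>Z. z = (x + y + u) mod 3" using 1(2) 2(1,2) by blast
  next
    assume "\<exists>x\<in>X. \<exists>y\<in>Y. \<exists>u\<in>Z. z = (x + y + u) mod 3"
    then obtain x y u where 1: "x \<in> X" "y \<in> Y" "u \<in> Z" "z = (x + y + u) mod 3" by blast
    have 3: "(x + y) mod 3 \<in> cplx_mult X Y" by (rule M_memI[OF 1(1,2) refl])
    have 4: "z = ((x + y) mod 3 + u) mod 3" using 1(4) e2 by simp
    show "z \<in> cplx_mult (cplx_mult X Y) Z" by (rule M_memI[OF 3 1(3) 4])
  qed
  show ?thesis using L R by blast
qed

lemma Z3_mod: "x \<in> Z3 \<Longrightarrow> x mod 3 = x"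
  unfolding Z3_def by auto

lemma M_unit: "X \<subseteq> Z3 \<Longrightarrow> cplx_mult {0} X = X \<and> cplx_mult X {0} = X"
proof -
  assume X: "X \<subseteq> Z3"
  have "\<And>x. x \<in> X \<Longrightarrow> x mod 3 = x" using X Z3_mod by blast
  then show ?thesis unfolding cplx_mult_def by force
qed

lemma M_single: "cplx_mult {x} {y} = {(x+y) mod 3}"
  unfolding cplx_mult_def by auto

lemma M_sing_sub: "cplx_mult X {c} \<subseteq> Z \<longleftrightarrow> (\<forall>x\<in>X. (x + c) mod 3 \<in> Z)"
  unfolding cplx_mult_def by auto

lemma M_sing_sub2: "cplx_mult {c} Y \<subseteq> Z \<longleftrightarrow> (\<forall>y\<in>Y. (c + y) mod 3 \<in> Z)"
  unfolding cplx_mult_def by auto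

lemma M_sub_iff: "cplx_mult X Y \<subseteq> Z \<longleftrightarrow> (\<forall>x\<in>X. \<forall>y\<in>Y. (x + y) mod 3 \<in> Z)"
  unfolding cplx_mult_def by auto

lemma resid1: "Y \<subseteq> Z3 \<Longrightarrow> (cplx_mult X Y \<subseteq> Z \<longleftrightarrow> Y \<subseteq> LD X Z)"
  unfolding LD_def M_sub_iff M_sing_sub by auto

lemma resid2: "X \<subseteq> Z3 \<Longrightarrow> (cplx_mult X Y \<subseteq> Z \<longleftrightarrow> X \<subseteq> RD Z Y)"
  unfolding RD_def M_sub_iff M_sing_sub2 by auto

lemma LD_mono: "a' \<subseteq> a \<Longrightarrow> b \<subseteq> b' \<Longrightarrow> LD a b \<subseteq> LD a' b'"
  unfolding LD_def M_sing_sub by auto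

lemma r_le_fok: "fok A C \<Longrightarrow> r_le A X Y \<longleftrightarrow> X \<subseteq> Y"
  unfolding fok_def r_le_def by auto

lemma bdl_fok: "fok A C \<Longrightarrow> clos C \<Longrightarrow> bounded_distrib_lattice A"
  unfolding fok_def clos_def bounded_distrib_lattice_def Let_def by auto

lemma rl_gen: "A = Z3cx\<lparr>carrier := C\<rparr> \<Longrightarrow> clos C \<Longrightarrow> residuated_lattice A"
proof -
  assume A: "A = Z3cx\<lparr>carrier := C\<rparr>" and c: "clos C"
  have f: "fok A C" unfolding A fok_def Z3cx_def LD_def RD_def by simp
  have m: "r_mult A = cplx_mult" "r_one A = {0}" "r_ldiv A = LD" "r_rdiv A = RD" "carrier A = C"
    unfolding A Z3cx_def LD_def RD_def by simp_all
  have sub: "\<And>X. X \<in> C \<Longrightarrow> X \<subseteq> Z3" using c unfolding clos_def by auto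
  have 1: "bounded_distrib_lattice A" by (rule bdl_fok[OF f c])
  have 2: "\<forall>x\<in>C. \<forall>y\<in>C. LD x y \<in> C \<and> RD x y \<in> C \<and> cplx_mult x y \<in> C"
    using c unfolding clos_def by blast
  have 3: "{0} \<in> C" using c unfolding clos_def by blast
  have 4: "\<forall>x\<in>C. \<forall>y\<in>C. \<forall>z\<in>C. cplx_mult x (cplx_mult y z) = cplx_mult (cplx_mult x y) z"
    by (simp add: M_assoc)
  have 5: "\<forall>x\<in>C. cplx_mult {0} x = x \<and> cplx_mult x {0} = x" by (simp add: M_unit sub)
  have 6: "\<forall>x\<in>C. \<forall>y\<in>C. \<forall>z\<in>C. (cplx_mult x y \<subseteq> z \<longleftrightarrow> y \<subseteq> LD x z) \<and>
        (cplx_mult x y \<subseteq> z \<longleftrightarrow> x \<subseteq> RD z y)"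
  proof (intro ballI conjI)
    fix x y z assume "x \<in> C" "y \<in> C" "z \<in> C"
    then have yz: "y \<subseteq> Z3" and xz: "x \<subseteq> Z3" using sub by auto
    show "cplx_mult x y \<subseteq> z \<longleftrightarrow> y \<subseteq> LD x z" by (rule resid1[OF yz])
    show "cplx_mult x y \<subseteq> z \<longleftrightarrow> x \<subseteq> RD z y" by (rule resid2[OF xz])
  qed
  show ?thesis unfolding residuated_lattice_def r_le_fok[OF f] m
    using 1 2 3 4 5 6 by blast
qed

lemma ra_gen: "A = Z3cx\<lparr>carrier := C\<rparr> \<Longrightarrow> clos C \<Longrightarrow> residuation_algebra (ra.truncate A)"
proof -
  assume A: "A = Z3cx\<lparr>carrier := C\<rparr>" and c: "clos C"
  have f: "fok (ra.truncate A) C" unfolding A fok_def Z3cx_def LD_def RD_def by (simp add: ra.defs)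
  have m: "r_ldiv (ra.truncate A) = LD" "r_rdiv (ra.truncate A) = RD" "carrier (ra.truncate A) = C"
    "r_top (ra.truncate A) = Z3" "r_meet (ra.truncate A) = (\<inter>)"
    using f unfolding fok_def by auto
  have sub: "\<And>X. X \<in> C \<Longrightarrow> X \<subseteq> Z3" using c unfolding clos_def by auto
  have 1: "bounded_distrib_lattice (ra.truncate A)" by (rule bdl_fok[OF f c])
  have 2: "\<forall>x\<in>C. \<forall>y\<in>C. LD x y \<in> C \<and> RD x y \<in> C"
    using c unfolding clos_def by blast
  have t1: "\<forall>a\<in>C. LD a Z3 = Z3" unfolding LD_def M_sing_sub using mod3_in by auto
  have t2: "\<forall>a\<in>C. RD Z3 a = Z3" unfolding RD_def M_sing_sub2 using mod3_in by auto
  have t3: "\<forall>a\<in>C. \<forall>b\<in>C. \<forall>c\<in>C. LD a (b \<inter> c) = LD a b \<inter> LD a c" unfolding LD_def by auto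
  have t4: "\<forall>a\<in>C. \<forall>b\<in>C. \<forall>c\<in>C. RD (b \<inter> c) a = RD b a \<inter> RD c a" unfolding RD_def by auto
  have 6: "\<forall>a\<in>C. \<forall>b\<in>C. \<forall>c\<in>C. (b \<subseteq> LD a c \<longleftrightarrow> a \<subseteq> RD c b)"
  proof (intro ballI)
    fix x y z assume "x \<in> C" "y \<in> C" "z \<in> C"
    then show "y \<subseteq> LD x z \<longleftrightarrow> x \<subseteq> RD z y"
    proof -
      have "cplx_mult x y \<subseteq> z \<longleftrightarrow> y \<subseteq> LD x z" by (rule resid1) (use sub \<open>y \<in> C\<close> in auto)
      moreover have "cplx_mult x y \<subseteq> z \<longleftrightarrow> x \<subseteq> RD z y" by (rule resid2) (use sub \<open>x \<in> C\<close> in auto)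
      ultimately show ?thesis by simp
    qed
  qed
  show ?thesis unfolding residuation_algebra_def r_le_fok[OF f] m
    using 1 2 t1 t2 t3 t4 6 by blast
qed

lemma emb_sub: "emb A a \<subseteq> prime_filters A"
  unfolding emb_def by auto

lemma emb_mono: "fok A C \<Longrightarrow> b \<in> C \<Longrightarrow> a \<subseteq> b \<Longrightarrow> emb A a \<subseteq> emb A b"
proof
  fix F assume f: "fok A C" and b: "b \<in> C" and ab: "a \<subseteq> b" and F: "F \<in> emb A a"
  have up: "\<forall>x\<in>F. \<forall>y\<in>carrier A. r_le A x y \<longrightarrow> y \<in> F" "F \<in> prime_filters A" "a \<in> F"
    using F unfolding emb_def prime_filters_def by auto
  have "b \<in> carrier A" "r_le A a b" using b ab f r_le_fok[OF f] unfolding fok_def by auto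
  then show "F \<in> emb A b" using up unfolding emb_def by blast
qed

lemma cext_pow: "\<forall>F\<in>prime_filters A. \<forall>G\<in>prime_filters A. F \<subseteq> G \<longrightarrow> F = G
   \<Longrightarrow> cext A = Pow (prime_filters A)"
  unfolding cext_def by blast

lemma Jinf_pow: "cext A = Pow (prime_filters A) \<Longrightarrow> Jinf A = (\<lambda>F. {F}) ` prime_filters A"
proof
  assume c: "cext A = Pow (prime_filters A)"
  show "Jinf A \<subseteq> (\<lambda>F. {F}) ` prime_filters A"
  proof
    fix j assume j: "j \<in> Jinf A"
    have j1: "j \<subseteq> prime_filters A" "j \<noteq> {}" using c j unfolding Jinf_def by auto
    have jp: "\<forall>S. S \<subseteq> cext A \<longrightarrow> j = \<Union>S \<longrightarrow> j \<in> S" using j unfolding Jinf_def by simp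
    have s1: "(\<lambda>F. {F}) ` j \<subseteq> cext A" using c j1 by auto
    have s2: "j = \<Union>((\<lambda>F. {F}) ` j)" by auto
    have "j \<in> (\<lambda>F. {F}) ` j" using jp[rule_format, OF s1 s2] .
    then obtain F where "F \<in> j" "j = {F}" by auto
    then show "j \<in> (\<lambda>F. {F}) ` prime_filters A" using j1 by auto
  qed
next
  assume c: "cext A = Pow (prime_filters A)"
  show "(\<lambda>F. {F}) ` prime_filters A \<subseteq> Jinf A"
  proof
    fix j assume "j \<in> (\<lambda>F. {F}) ` prime_filters A"
    then obtain F where F: "F \<in> prime_filters A" "j = {F}" by auto
    have "j \<in> S" if S: "S \<subseteq> cext A" "j = \<Union>S" for S
    proof -
      have "F \<in> \<Union>S" using F(2) S(2) singletonI by metis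
      then obtain s where s: "s \<in> S" "F \<in> s" by auto
      have "s \<subseteq> \<Union>S" using s by auto
      then have "s \<subseteq> {F}" using S F by simp
      then have "s = {F}" using s by auto
      then show "j \<in> S" using s F by simp
    qed
    moreover have "j \<in> cext A" "j \<noteq> {}" using c F by auto
    ultimately show "j \<in> Jinf A" unfolding Jinf_def by blast
  qed
qed

lemma closed_pow: "closed_elts A \<subseteq> Pow (prime_filters A)"
  unfolding closed_elts_def by auto

lemma open_pow: "open_elts A \<subseteq> Pow (prime_filters A)"
  unfolding open_elts_def emb_def by auto

lemma KO_mem:
  assumes "a' \<in> carrier A" "b' \<in> carrier A" "k \<subseteq> emb A a'" "emb A b' \<subseteq> op"
  shows "emb A (r_ldiv A a' b') \<subseteq> ldiv_pi_KO A k op"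
  unfolding ldiv_pi_KO_def
  apply (rule Union_upper)
  apply (rule CollectI)
  apply (rule exI[of _ a'])
  apply (rule exI[of _ b'])
  using assms by simp

lemma KO_elim:
  assumes "x \<in> ldiv_pi_KO A k op"
  obtains a' b' where "a' \<in> carrier A" "b' \<in> carrier A" "k \<subseteq> emb A a'" "emb A b' \<subseteq> op"
    "x \<in> emb A (r_ldiv A a' b')"
  using assms unfolding ldiv_pi_KO_def by blast

lemma ldiv_pi_emb:
  assumes f: "fok A C" and cl: "clos C"
    and surj: "\<forall>U. U \<subseteq> prime_filters A \<longrightarrow> (\<exists>c\<in>C. U = emb A c)"
    and refl: "\<forall>a\<in>C. \<forall>c\<in>C. emb A a \<subseteq> emb A c \<longrightarrow> a \<subseteq> c"
    and a: "a \<in> C" and c: "c \<in> C"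
  shows "ldiv_pi A (emb A a) (emb A c) = emb A (LD a c)"
proof
  have ldC: "\<And>x y. x \<in> C \<Longrightarrow> y \<in> C \<Longrightarrow> LD x y \<in> C" using cl unfolding clos_def by auto
  have ld: "r_ldiv A = LD" using f unfolding fok_def by auto
  have cr: "carrier A = C" using f unfolding fok_def by auto
  show "emb A (LD a c) \<subseteq> ldiv_pi A (emb A a) (emb A c)"
    unfolding ldiv_pi_def
  proof (intro Int_greatest emb_sub Inter_greatest)
    fix X assume "X \<in> {ldiv_pi_KO A k op |k op.
         k \<in> closed_elts A \<and> op \<in> open_elts A \<and> k \<subseteq> emb A a \<and> emb A c \<subseteq> op}"
    then obtain k op where X: "X = ldiv_pi_KO A k op" and k: "k \<in> closed_elts A" and op: "op \<in> open_elts A"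
      and ka: "k \<subseteq> emb A a" and co: "emb A c \<subseteq> op" by blast
    have "k \<subseteq> prime_filters A" using k closed_pow by blast
    then obtain a' where a': "a' \<in> C" "k = emb A a'" using surj by blast
    have "op \<subseteq> prime_filters A" using op open_pow by blast
    then obtain b' where b': "b' \<in> C" "op = emb A b'" using surj by blast
    have "a' \<subseteq> a" using refl[rule_format, OF a'(1) a] ka a'(2) by simp
    moreover have "c \<subseteq> b'" using refl[rule_format, OF c b'(1)] co b'(2) by simp
    ultimately have "LD a c \<subseteq> LD a' b'" by (rule LD_mono)
    then have 1: "emb A (LD a c) \<subseteq> emb A (LD a' b')" by (rule emb_mono[OF f ldC[OF a'(1) b'(1)]])
    have 2: "emb A (LD a' b') \<subseteq> ldiv_pi_KO A k op"
      using KO_mem[of a' A b' k op] a'(1) b'(1) a'(2) b'(2) unfolding cr ld by simp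
    show "emb A (LD a c) \<subseteq> X" using 1 2 X by simp
  qed
next
  have ldC: "\<And>x y. x \<in> C \<Longrightarrow> y \<in> C \<Longrightarrow> LD x y \<in> C" using cl unfolding clos_def by auto
  have ld: "r_ldiv A = LD" using f unfolding fok_def by auto
  have cr: "carrier A = C" using f unfolding fok_def by auto
  have kc: "emb A a \<in> closed_elts A" unfolding closed_elts_def
  proof (intro CollectI exI conjI)
    show "emb A a = prime_filters A \<inter> (\<Inter>x\<in>{a}. emb A x)" using emb_sub[of A a] by auto
    show "{a} \<subseteq> carrier A" using a cr by simp
  qed
  have oc: "emb A c \<in> open_elts A" unfolding open_elts_def
  proof (intro CollectI exI conjI)
    show "emb A c = (\<Union>x\<in>{c}. emb A x)" by simp
    show "{c} \<subseteq> carrier A" using c cr by simp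
  qed
  have "ldiv_pi A (emb A a) (emb A c) \<subseteq> ldiv_pi_KO A (emb A a) (emb A c)"
    unfolding ldiv_pi_def using kc oc by blast
  also have "\<dots> \<subseteq> emb A (LD a c)"
  proof
    fix x assume "x \<in> ldiv_pi_KO A (emb A a) (emb A c)"
    then obtain a' b where X: "a' \<in> carrier A" "b \<in> carrier A" "emb A a \<subseteq> emb A a'"
       "emb A b \<subseteq> emb A c" "x \<in> emb A (r_ldiv A a' b)" by (rule KO_elim)
    have "a \<subseteq> a'" using refl[rule_format, OF a] X(1,3) cr by simp
    moreover have "b \<subseteq> c" using refl[rule_format, OF _ c] X(2,4) cr by simp
    ultimately have "LD a' b \<subseteq> LD a c" by (rule LD_mono)
    then have "emb A (LD a' b) \<subseteq> emb A (LD a c)" by (rule emb_mono[OF f ldC[OF a c]])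
    then show "x \<in> emb A (LD a c)" using X(5) ld by auto
  qed
  finally show "ldiv_pi A (emb A a) (emb A c) \<subseteq> emb A (LD a c)" .
qed

lemma cprod_emb:
  assumes f: "fok A C" and cl: "clos C"
    and anti: "\<forall>F\<in>prime_filters A. \<forall>G\<in>prime_filters A. F \<subseteq> G \<longrightarrow> F = G"
    and surj: "\<forall>U. U \<subseteq> prime_filters A \<longrightarrow> (\<exists>c\<in>C. U = emb A c)"
    and refl: "\<forall>a\<in>C. \<forall>c\<in>C. emb A a \<subseteq> emb A c \<longrightarrow> a \<subseteq> c"
    and a: "a \<in> C" and b: "b \<in> C"
  shows "cprod A (emb A a) (emb A b) = emb A (cplx_mult a b)"
proof
  have ce: "cext A = Pow (prime_filters A)" by (rule cext_pow[OF anti])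
  have mC: "cplx_mult a b \<in> C" using cl a b unfolding clos_def by blast
  have ldC: "\<And>x y. x \<in> C \<Longrightarrow> y \<in> C \<Longrightarrow> LD x y \<in> C" using cl unfolding clos_def by blast
  have sub: "\<And>x. x \<in> C \<Longrightarrow> x \<subseteq> Z3" using cl unfolding clos_def by blast
  have "b \<subseteq> LD a (cplx_mult a b)" using resid1[OF sub[OF b], of a "cplx_mult a b"] by simp
  then have "emb A b \<subseteq> emb A (LD a (cplx_mult a b))" by (rule emb_mono[OF f ldC[OF a mC]])
  then have 1: "emb A b \<subseteq> ldiv_pi A (emb A a) (emb A (cplx_mult a b))"
    unfolding ldiv_pi_emb[OF f cl surj refl a mC] .
  have 2: "emb A (cplx_mult a b) \<in> cext A" using ce emb_sub[of A] by blast
  have "emb A (cplx_mult a b) \<in> {w \<in> cext A. emb A b \<subseteq> ldiv_pi A (emb A a) w}" using 1 2 by simp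
  then have "\<Inter>{w \<in> cext A. emb A b \<subseteq> ldiv_pi A (emb A a) w} \<subseteq> emb A (cplx_mult a b)"
    by (rule Inter_lower)
  then show "cprod A (emb A a) (emb A b) \<subseteq> emb A (cplx_mult a b)"
    unfolding cprod_def by auto
next
  have ce: "cext A = Pow (prime_filters A)" by (rule cext_pow[OF anti])
  have mC: "cplx_mult a b \<in> C" using cl a b unfolding clos_def by blast
  have sub: "\<And>x. x \<in> C \<Longrightarrow> x \<subseteq> Z3" using cl unfolding clos_def by blast
  have ldC: "\<And>x y. x \<in> C \<Longrightarrow> y \<in> C \<Longrightarrow> LD x y \<in> C" using cl unfolding clos_def by blast
  show "emb A (cplx_mult a b) \<subseteq> cprod A (emb A a) (emb A b)"
    unfolding cprod_def
  proof (intro Int_greatest emb_sub Inter_greatest)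
    fix w assume "w \<in> {w \<in> cext A. emb A b \<subseteq> ldiv_pi A (emb A a) w}"
    then have w: "w \<subseteq> prime_filters A" "emb A b \<subseteq> ldiv_pi A (emb A a) w" using ce by auto
    obtain c where c: "c \<in> C" "w = emb A c" using surj w(1) by blast
    have "emb A b \<subseteq> emb A (LD a c)" using w(2) unfolding c(2) ldiv_pi_emb[OF f cl surj refl a c(1)] .
    then have "b \<subseteq> LD a c" by (rule refl[rule_format, OF b ldC[OF a c(1)]])
    then have "cplx_mult a b \<subseteq> c" using resid1[OF sub[OF b], of a c] by simp
    then have "emb A (cplx_mult a b) \<subseteq> emb A c" by (rule emb_mono[OF f c(1)])
    then show "emb A (cplx_mult a b) \<subseteq> w" using c(2) by simp
  qed
qed

definition PF :: "int \<Rightarrow> int set set" where "PF x = {X. X \<subseteq> Z3 \<and> x \<in> X}"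

lemma pf_cx: assumes f: "fok A (Pow Z3)" shows "prime_filters A = PF ` Z3"
proof
  have cr: "carrier A = Pow Z3" "r_top A = Z3" "r_bot A = {}" "r_meet A = (\<inter>)" "r_join A = (\<union>)"
    using f unfolding fok_def by auto
  show "PF ` Z3 \<subseteq> prime_filters A"
  proof
    fix F assume "F \<in> PF ` Z3"
    then obtain x where x: "x \<in> Z3" "F = PF x" by blast
    show "F \<in> prime_filters A"
      unfolding prime_filters_def r_le_fok[OF f] cr x(2) PF_def using x(1) by auto
  qed
  show "prime_filters A \<subseteq> PF ` Z3"
  proof
    fix F assume F: "F \<in> prime_filters A"
    have F0: "F \<subseteq> carrier A \<and> r_top A \<in> F \<and> r_bot A \<notin> F \<and>
      (\<forall>x\<in>F. \<forall>y\<in>carrier A. r_le A x y \<longrightarrow> y \<in> F) \<and>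
      (\<forall>x\<in>F. \<forall>y\<in>F. r_meet A x y \<in> F) \<and>
      (\<forall>x\<in>carrier A. \<forall>y\<in>carrier A. r_join A x y \<in> F \<longrightarrow> x \<in> F \<or> y \<in> F)"
      using F unfolding prime_filters_def by simp
    have F1: "F \<subseteq> Pow Z3" "Z3 \<in> F" "{} \<notin> F" 
      using F0 unfolding cr by auto
    have F4: "\<And>x y. x \<in> F \<Longrightarrow> y \<subseteq> Z3 \<Longrightarrow> x \<subseteq> y \<Longrightarrow> y \<in> F"
      using F0 unfolding cr r_le_fok[OF f] by blast
    have F5: "\<And>x y. x \<in> F \<Longrightarrow> y \<in> F \<Longrightarrow> x \<inter> y \<in> F"
      using F0 unfolding cr by blast
    have F6: "\<And>x y. x \<subseteq> Z3 \<Longrightarrow> y \<subseteq> Z3 \<Longrightarrow> x \<union> y \<in> F \<Longrightarrow> x \<in> F \<or> y \<in> F"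
      using F0 unfolding cr by blast
    have z: "{0} \<union> {1,2} = Z3" "{1} \<union> {2} = {1,2::int}" "{0} \<subseteq> Z3" "{1,2} \<subseteq> Z3"
       "{1} \<subseteq> Z3" "{2} \<subseteq> Z3" "(0::int) \<in> Z3" "(1::int) \<in> Z3" "(2::int) \<in> Z3"
      unfolding Z3_def by auto
    have "{0} \<in> F \<or> {1,2} \<in> F" using F6[OF z(3) z(4)] F1(2) z(1) by simp
    moreover have "{1,2} \<in> F \<Longrightarrow> {1} \<in> F \<or> {2} \<in> F" using F6[OF z(5) z(6)] z(2) by simp
    ultimately have "\<exists>x\<in>Z3. {x} \<in> F" using z(7,8,9) by blast
    then obtain x where x: "x \<in> Z3" "{x} \<in> F" by blast
    have "F = PF x"
    proof
      show "F \<subseteq> PF x"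
      proof
        fix X assume X: "X \<in> F"
        then have "X \<inter> {x} \<in> F" using F5 x by blast
        then have "X \<inter> {x} \<noteq> {}" using F1(3) by metis
        then have "x \<in> X" by blast
        then show "X \<in> PF x" using X F1(1) unfolding PF_def by auto
      qed
      show "PF x \<subseteq> F"
      proof
        fix X assume "X \<in> PF x"
        then have "X \<subseteq> Z3" "{x} \<subseteq> X" unfolding PF_def by auto
        then show "X \<in> F" using F4[OF x(2)] by blast
      qed
    qed
    then show "F \<in> PF ` Z3" using x(1) by blast
  qed
qed

lemma emb_cx: assumes f: "fok A (Pow Z3)" and X: "X \<subseteq> Z3" shows "emb A X = PF ` X"
  unfolding emb_def pf_cx[OF f] PF_def using X by auto

lemma PF_inj: "x \<in> Z3 \<Longrightarrow> y \<in> Z3 \<Longrightarrow> PF x \<subseteq> PF y \<Longrightarrow> x = y"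
  unfolding PF_def by auto

lemma clos_cx: "clos (Pow Z3)"
  unfolding clos_def LD_def RD_def Z3_def using M_sub[unfolded Z3_def] by auto

lemma dual_cx: assumes f: "fok A (Pow Z3)" shows "dual_total A \<and> dual_functional A"
proof -
  have P: "prime_filters A = PF ` Z3" by (rule pf_cx[OF f])
  have anti: "\<forall>F\<in>prime_filters A. \<forall>G\<in>prime_filters A. F \<subseteq> G \<longrightarrow> F = G"
    unfolding P using PF_inj by blast
  have surj: "\<forall>U. U \<subseteq> prime_filters A \<longrightarrow> (\<exists>c\<in>Pow Z3. U = emb A c)"
  proof (intro allI impI)
    fix U assume "U \<subseteq> prime_filters A"
    then have "U = PF ` {x \<in> Z3. PF x \<in> U}" unfolding P by auto
    then show "\<exists>c\<in>Pow Z3. U = emb A c" using emb_cx[OF f, of "{x \<in> Z3. PF x \<in> U}"] by auto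
  qed
  have refl: "\<forall>a\<in>Pow Z3. \<forall>c\<in>Pow Z3. emb A a \<subseteq> emb A c \<longrightarrow> a \<subseteq> c"
  proof (intro ballI impI subsetI)
    fix a c x assume a: "a \<in> Pow Z3" and c: "c \<in> Pow Z3" and s: "emb A a \<subseteq> emb A c" and x: "x \<in> a"
    then have "PF x \<in> PF ` c" using emb_cx[OF f] by auto
    then obtain y where "y \<in> c" "PF x = PF y" by auto
    then show "x \<in> c" using PF_inj[of x y] a c x by auto
  qed
  have J: "Jinf A = (\<lambda>F. {F}) ` prime_filters A" by (rule Jinf_pow[OF cext_pow[OF anti]])
  have "\<forall>y\<in>Jinf A. \<forall>z\<in>Jinf A. cprod A y z \<in> Jinf A"
  proof (intro ballI)
    fix y z assume "y \<in> Jinf A" "z \<in> Jinf A"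
    then obtain u v where uv: "u \<in> Z3" "v \<in> Z3" "y = emb A {u}" "z = emb A {v}"
      unfolding J P using emb_cx[OF f] by auto
    have "cprod A y z = emb A (cplx_mult {u} {v})"
      unfolding uv by (rule cprod_emb[OF f clos_cx anti surj refl]) (use uv in auto)
    also have "\<dots> = {PF ((u+v) mod 3)}" unfolding M_single using emb_cx[OF f] mod3_in by auto
    finally show "cprod A y z \<in> Jinf A" unfolding J P using mod3_in by auto
  qed
  then show ?thesis unfolding dual_total_def dual_functional_def by auto
qed


definition C4 :: "int set set" where "C4 = {{}, {0}, {1, 2}, Z3}"

lemma C4_iff: "X \<in> C4 \<longleftrightarrow> X \<subseteq> Z3 \<and> (1 \<in> X \<longleftrightarrow> 2 \<in> X)"
proof
  assume "X \<in> C4" then show "X \<subseteq> Z3 \<and> (1 \<in> X \<longleftrightarrow> 2 \<in> X)" unfolding C4_def Z3_def by auto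
next
  assume a: "X \<subseteq> Z3 \<and> (1 \<in> X \<longleftrightarrow> 2 \<in> X)"
  have s: "X \<subseteq> {0,1,2}" using a unfolding Z3_def by simp
  show "X \<in> C4"
  proof (cases "0 \<in> X"; cases "1 \<in> X")
    assume "0 \<in> X" "1 \<in> X" then have "X = Z3" using a s unfolding Z3_def by auto
    then show ?thesis unfolding C4_def by simp
  next
    assume "0 \<in> X" "1 \<notin> X" then have "X = {0}" using a s by auto
    then show ?thesis unfolding C4_def by simp
  next
    assume "0 \<notin> X" "1 \<in> X" then have "X = {1,2}" using a s by auto
    then show ?thesis unfolding C4_def by simp
  next
    assume "0 \<notin> X" "1 \<notin> X" then have "X = {}" using a s by auto
    then show ?thesis unfolding C4_def by simp
  qed
qed

lemma ball_Z3: "X \<subseteq> Z3 \<Longrightarrow> (\<forall>x\<in>X. P x) \<longleftrightarrow> ((0 \<in> X \<longrightarrow> P 0) \<and> (1 \<in> X \<longrightarrow> P 1) \<and> (2 \<in> X \<longrightarrow> P 2))"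
  unfolding Z3_def by auto

lemma bex_Z3: "X \<subseteq> Z3 \<Longrightarrow> (\<exists>x\<in>X. P x) \<longleftrightarrow> ((0 \<in> X \<and> P 0) \<or> (1 \<in> X \<and> P 1) \<or> (2 \<in> X \<and> P 2))"
  unfolding Z3_def by auto

lemma in_Z3: "(0::int) \<in> Z3" "(1::int) \<in> Z3" "(2::int) \<in> Z3"
  unfolding Z3_def by auto

lemma LD_mem: "c \<in> LD X Y \<longleftrightarrow> c \<in> Z3 \<and> (\<forall>x\<in>X. (x + c) mod 3 \<in> Y)"
  unfolding LD_def M_sing_sub by simp

lemma RD_mem: "c \<in> RD X Y \<longleftrightarrow> c \<in> Z3 \<and> (\<forall>y\<in>Y. (c + y) mod 3 \<in> X)"
  unfolding RD_def M_sing_sub2 by simp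

lemma clos_C4: "clos C4"
  unfolding clos_def
proof (intro conjI ballI)
  show "C4 \<subseteq> Pow Z3" using C4_iff by blast
  show "{} \<in> C4" "Z3 \<in> C4" "{0} \<in> C4" unfolding C4_def by auto
next
  fix X Y assume X: "X \<in> C4" and Y: "Y \<in> C4"
  have x: "X \<subseteq> Z3" "1 \<in> X \<longleftrightarrow> 2 \<in> X" using X C4_iff by auto
  have y: "Y \<subseteq> Z3" "1 \<in> Y \<longleftrightarrow> 2 \<in> Y" using Y C4_iff by auto
  show "X \<inter> Y \<in> C4" "X \<union> Y \<in> C4" unfolding C4_iff using x y by auto
  have "1 \<in> LD X Y \<longleftrightarrow> 2 \<in> LD X Y" unfolding LD_mem ball_Z3[OF x(1)] using in_Z3 x(2) y(2) by auto
  then show "LD X Y \<in> C4" unfolding C4_iff LD_def by auto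
  have "1 \<in> RD X Y \<longleftrightarrow> 2 \<in> RD X Y" unfolding RD_mem ball_Z3[OF y(1)] using in_Z3 x(2) y(2) by auto
  then show "RD X Y \<in> C4" unfolding C4_iff RD_def by auto
  have "1 \<in> cplx_mult X Y \<longleftrightarrow> 2 \<in> cplx_mult X Y" unfolding M_mem bex_Z3[OF x(1)] bex_Z3[OF y(1)]
    using x(2) y(2) by auto
  then show "cplx_mult X Y \<in> C4" unfolding C4_iff using M_sub by auto
qed


definition QQ :: "int \<Rightarrow> int set set" where "QQ i = {X \<in> C4. i \<in> X}"

lemma pf_sub: assumes f: "fok A C4" shows "prime_filters A = {QQ 0, QQ 1}"
proof
  have cr: "carrier A = C4" "r_top A = Z3" "r_bot A = {}" "r_meet A = (\<inter>)" "r_join A = (\<union>)"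
    using f unfolding fok_def by auto
  have cl: "\<And>X Y. X \<in> C4 \<Longrightarrow> Y \<in> C4 \<Longrightarrow> X \<inter> Y \<in> C4" using clos_C4 unfolding clos_def by blast
  have z3: "Z3 \<in> C4" unfolding C4_def by simp
  show "{QQ 0, QQ 1} \<subseteq> prime_filters A"
  proof
    fix F assume "F \<in> {QQ 0, QQ 1}"
    then obtain i where i: "i \<in> Z3" "F = QQ i" using in_Z3 by blast
    show "F \<in> prime_filters A"
      unfolding prime_filters_def r_le_fok[OF f] cr i(2) QQ_def using i(1) z3 cl by auto
  qed
  show "prime_filters A \<subseteq> {QQ 0, QQ 1}"
  proof
    fix F assume F: "F \<in> prime_filters A"
    have F0: "F \<subseteq> carrier A \<and> r_top A \<in> F \<and> r_bot A \<notin> F \<and>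
      (\<forall>x\<in>F. \<forall>y\<in>carrier A. r_le A x y \<longrightarrow> y \<in> F) \<and>
      (\<forall>x\<in>F. \<forall>y\<in>F. r_meet A x y \<in> F) \<and>
      (\<forall>x\<in>carrier A. \<forall>y\<in>carrier A. r_join A x y \<in> F \<longrightarrow> x \<in> F \<or> y \<in> F)"
      using F unfolding prime_filters_def by simp
    have F1: "F \<subseteq> C4" "Z3 \<in> F" "{} \<notin> F"
      using F0 unfolding cr by auto
    have F4: "\<And>x y. x \<in> F \<Longrightarrow> y \<in> C4 \<Longrightarrow> x \<subseteq> y \<Longrightarrow> y \<in> F"
      using F0 unfolding cr r_le_fok[OF f] by blast
    have F5: "\<And>x y. x \<in> F \<Longrightarrow> y \<in> F \<Longrightarrow> x \<inter> y \<in> F"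
      using F0 unfolding cr by blast
    have F6: "\<And>x y. x \<in> C4 \<Longrightarrow> y \<in> C4 \<Longrightarrow> x \<union> y \<in> F \<Longrightarrow> x \<in> F \<or> y \<in> F"
      using F0 unfolding cr by blast
    have z: "{0} \<union> {1,2} = Z3" "{0} \<in> C4" "{1,2} \<in> C4"
      unfolding Z3_def C4_def by auto
    have "{0} \<in> F \<or> {1,2} \<in> F" using F6[OF z(2) z(3)] F1(2) z(1) by simp
    then show "F \<in> {QQ 0, QQ 1}"
    proof
      assume a: "{0} \<in> F"
      have "F = QQ 0"
      proof
        show "F \<subseteq> QQ 0"
        proof
          fix X assume X: "X \<in> F"
          then have "X \<inter> {0} \<in> F" using F5 a by blast
          then have "X \<inter> {0} \<noteq> {}" using F1(3) by metis
          then have "0 \<in> X" by blast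
          then show "X \<in> QQ 0" using X F1(1) unfolding QQ_def by auto
        qed
        show "QQ 0 \<subseteq> F"
        proof
          fix X assume "X \<in> QQ 0"
          then have "X \<in> C4" "{0} \<subseteq> X" unfolding QQ_def by auto
          then show "X \<in> F" using F4[OF a] by blast
        qed
      qed
      then show ?thesis by simp
    next
      assume a: "{1,2} \<in> F"
      have "F = QQ 1"
      proof
        show "F \<subseteq> QQ 1"
        proof
          fix X assume X: "X \<in> F"
          then have "X \<inter> {1,2} \<in> F" using F5 a by blast
          then have "X \<inter> {1,2} \<noteq> {}" using F1(3) by metis
          then have "1 \<in> X \<or> 2 \<in> X" by blast
          moreover have "X \<in> C4" using X F1(1) by blast
          ultimately have "1 \<in> X" using C4_iff by blast
          then show "X \<in> QQ 1" using \<open>X \<in> C4\<close> unfolding QQ_def by auto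
        qed
        show "QQ 1 \<subseteq> F"
        proof
          fix X assume "X \<in> QQ 1"
          then have "X \<in> C4" "1 \<in> X" unfolding QQ_def by auto
          then have "{1,2} \<subseteq> X" using C4_iff by blast
          then show "X \<in> F" using F4[OF a] \<open>X \<in> C4\<close> by blast
        qed
      qed
      then show ?thesis by simp
    qed
  qed
qed

lemma QQ_facts: "{0} \<in> QQ 0" "{0} \<notin> QQ 1" "{1,2} \<in> QQ 1" "{1,2} \<notin> QQ 0" "QQ 0 \<noteq> QQ 1"
proof -
  show a: "{0} \<in> QQ 0" unfolding QQ_def C4_def by simp
  show b: "{0} \<notin> QQ 1" unfolding QQ_def by simp
  show "{1,2} \<in> QQ 1" unfolding QQ_def C4_def by simp
  show "{1,2} \<notin> QQ 0" unfolding QQ_def by simp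
  show "QQ 0 \<noteq> QQ 1" using a b by metis
qed

lemma dual_sub: assumes f: "fok A C4" shows "\<not> dual_functional A"
proof
  assume df: "dual_functional A"
  have P: "prime_filters A = {QQ 0, QQ 1}" by (rule pf_sub[OF f])
  have anti: "\<forall>F\<in>prime_filters A. \<forall>G\<in>prime_filters A. F \<subseteq> G \<longrightarrow> F = G"
    unfolding P using QQ_facts by blast
  have QC: "\<And>X i. X \<in> QQ i \<Longrightarrow> X \<in> C4" unfolding QQ_def by auto
  have embq: "\<And>X. X \<in> C4 \<Longrightarrow> QQ 0 \<in> emb A X \<longleftrightarrow> 0 \<in> X" "\<And>X. X \<in> C4 \<Longrightarrow> QQ 1 \<in> emb A X \<longleftrightarrow> 1 \<in> X"
    unfolding emb_def P QQ_def by auto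
  have embs: "\<And>X. emb A X \<subseteq> {QQ 0, QQ 1}" using emb_sub P by metis
  have surj: "\<forall>U. U \<subseteq> prime_filters A \<longrightarrow> (\<exists>c\<in>C4. U = emb A c)"
  proof (intro allI impI)
    fix U assume U: "U \<subseteq> prime_filters A"
    define c where "c = {x \<in> Z3. (x = 0 \<and> QQ 0 \<in> U) \<or> (x \<noteq> 0 \<and> QQ 1 \<in> U)}"
    have cC: "c \<in> C4" unfolding C4_iff c_def using in_Z3 by auto
    have "0 \<in> c \<longleftrightarrow> QQ 0 \<in> U" "1 \<in> c \<longleftrightarrow> QQ 1 \<in> U" unfolding c_def using in_Z3 by auto
    then have "QQ 0 \<in> emb A c \<longleftrightarrow> QQ 0 \<in> U" "QQ 1 \<in> emb A c \<longleftrightarrow> QQ 1 \<in> U" using embq cC by auto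
    then have "U = emb A c" using U embs[of c] unfolding P by blast
    then show "\<exists>c\<in>C4. U = emb A c" using cC by blast
  qed
  have refl: "\<forall>a\<in>C4. \<forall>c\<in>C4. emb A a \<subseteq> emb A c \<longrightarrow> a \<subseteq> c"
  proof (intro ballI impI subsetI)
    fix a c x assume a: "a \<in> C4" and c: "c \<in> C4" and s: "emb A a \<subseteq> emb A c" and x: "x \<in> a"
    have ia: "a \<subseteq> Z3" "1 \<in> a \<longleftrightarrow> 2 \<in> a" using a C4_iff by auto
    have ic: "c \<subseteq> Z3" "1 \<in> c \<longleftrightarrow> 2 \<in> c" using c C4_iff by auto
    have "x = 0 \<or> x = 1 \<or> x = 2" using x ia(1) unfolding Z3_def by auto
    then show "x \<in> c"
    proof (elim disjE)
      assume "x = 0" then show "x \<in> c" using x s embq(1)[OF a] embq(1)[OF c] by blast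
    next
      assume x1: "x = 1" then show "x \<in> c" using x s embq(2)[OF a] embq(2)[OF c] by blast
    next
      assume x2: "x = 2" then have "1 \<in> a" using x ia(2) by simp
      then have "1 \<in> c" using s embq(2)[OF a] embq(2)[OF c] by blast
      then show "x \<in> c" using x2 ic(2) by simp
    qed
  qed
  have J: "Jinf A = (\<lambda>F. {F}) ` prime_filters A" by (rule Jinf_pow[OF cext_pow[OF anti]])
  have c12: "{1,2} \<in> C4" "Z3 \<in> C4" unfolding C4_def by auto
  have e12: "emb A {1,2} = {QQ 1}" using embq[OF c12(1)] embs[of "{1,2}"] by auto
  have eZ: "emb A Z3 = {QQ 0, QQ 1}" using embq[OF c12(2)] embs[of Z3] in_Z3 by auto
  have m: "cplx_mult {1,2} {1,2} = Z3" unfolding set_eq_iff M_mem Z3_def by auto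
  have "cprod A {QQ 1} {QQ 1} = {QQ 0, QQ 1}"
    using cprod_emb[OF f clos_C4 anti surj refl c12(1) c12(1)] unfolding e12 m eZ .
  moreover have "{QQ 1} \<in> Jinf A" unfolding J P by blast
  ultimately have "{QQ 0, QQ 1} \<in> Jinf A \<union> {{}}" using df unfolding dual_functional_def by metis
  then show False unfolding J P using QQ_facts(5) by auto
qed


lemma eval_r_cong:
  assumes "r_bot A = r_bot B" "r_top A = r_top B" "r_meet A = r_meet B" "r_join A = r_join B"
    "r_ldiv A = r_ldiv B" "r_rdiv A = r_rdiv B"
  shows "eval_r A \<rho> t = eval_r B \<rho> t"
  by (induction t) (simp_all add: assms)

lemma eval_l_cong:
  assumes "r_bot A = r_bot B" "r_top A = r_top B" "r_meet A = r_meet B" "r_join A = r_join B"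
    "r_ldiv A = r_ldiv B" "r_rdiv A = r_rdiv B" "r_mult A = r_mult B" "r_one A = r_one B"
  shows "eval_l A \<rho> t = eval_l B \<rho> t"
  by (induction t) (simp_all add: assms)

lemma cx_eq: "Z3cx = Z3cx\<lparr>carrier := Pow Z3\<rparr>" unfolding Z3cx_def by simp
lemma sub_eq: "Z3sub = Z3cx\<lparr>carrier := C4\<rparr>" unfolding Z3sub_def C4_def by simp

lemma fok_cx: "fok Z3cx (Pow Z3)" "fok (ra.truncate Z3cx) (Pow Z3)"
  unfolding fok_def Z3cx_def LD_def RD_def by (simp_all add: ra.defs)
lemma fok_sub: "fok Z3sub C4" "fok (ra.truncate Z3sub) C4"
  unfolding fok_def Z3sub_def Z3cx_def LD_def RD_def C4_def by (simp_all add: ra.defs)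

lemma C4_sub: "C4 \<subseteq> Pow Z3" using C4_iff by blast

lemma rcx: "residuated_lattice Z3cx" by (rule rl_gen[OF cx_eq clos_cx])
lemma rsub: "residuated_lattice Z3sub" by (rule rl_gen[OF sub_eq clos_C4])
lemma acx: "residuation_algebra (ra.truncate Z3cx)" by (rule ra_gen[OF cx_eq clos_cx])
lemma asub: "residuation_algebra (ra.truncate Z3sub)" by (rule ra_gen[OF sub_eq clos_C4])
lemma dcx: "dual_total Z3cx \<and> dual_functional Z3cx" by (rule dual_cx[OF fok_cx(1)])
lemma dcx': "dual_functional (ra.truncate Z3cx)" using dual_cx[OF fok_cx(2)] by simp
lemma dsub: "\<not> dual_functional Z3sub" by (rule dual_sub[OF fok_sub(1)])
lemma dsub': "\<not> dual_functional (ra.truncate Z3sub)" by (rule dual_sub[OF fok_sub(2)])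
lemma fl: "r_bot Z3sub = r_bot Z3cx" "r_top Z3sub = r_top Z3cx" "r_meet Z3sub = r_meet Z3cx"
    "r_join Z3sub = r_join Z3cx" "r_ldiv Z3sub = r_ldiv Z3cx" "r_rdiv Z3sub = r_rdiv Z3cx"
    "r_mult Z3sub = r_mult Z3cx" "r_one Z3sub = r_one Z3cx" "carrier Z3sub = C4" "carrier Z3cx = Pow Z3"
  unfolding Z3sub_def Z3cx_def C4_def by simp_all

lemma ev_r: "eval_r (ra.truncate Z3sub) \<rho> = eval_r (ra.truncate Z3cx) \<rho>"
proof
  fix t show "eval_r (ra.truncate Z3sub) \<rho> t = eval_r (ra.truncate Z3cx) \<rho> t"
    by (rule eval_r_cong) (simp_all add: ra.defs fl)
qed

lemma ev_l: "eval_l Z3sub \<rho> = eval_l Z3cx \<rho>"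
proof
  fix t show "eval_l Z3sub \<rho> t = eval_l Z3cx \<rho> t"
    by (rule eval_l_cong) (simp_all add: fl)
qed

lemma models_r: "models_univ_r (ra.truncate Z3cx) \<phi> \<Longrightarrow> models_univ_r (ra.truncate Z3sub) \<phi>"
  unfolding models_univ_r_def ev_r using C4_sub by (simp add: ra.defs fl) blast

lemma models_l: "models_univ_l Z3cx \<phi> \<Longrightarrow> models_univ_l Z3sub \<phi>"
  unfolding models_univ_l_def ev_l using C4_sub by (simp add: fl) blast

lemma P1: "\<not> (\<exists>\<phi> :: rterm qf. \<forall>A :: int set ra.
              residuation_algebra A \<longrightarrow> (models_univ_r A \<phi> \<longleftrightarrow> dual_functional A))"
proof
  assume "\<exists>\<phi> :: rterm qf. \<forall>A :: int set ra.
              residuation_algebra A \<longrightarrow> (models_univ_r A \<phi> \<longleftrightarrow> dual_functional A)"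
  then obtain \<phi> :: "rterm qf" where h: "\<forall>A :: int set ra.
              residuation_algebra A \<longrightarrow> (models_univ_r A \<phi> \<longleftrightarrow> dual_functional A)" by blast
  have "models_univ_r (ra.truncate Z3cx) \<phi>" using h acx dcx' by blast
  then have "models_univ_r (ra.truncate Z3sub) \<phi>" by (rule models_r)
  then have "dual_functional (ra.truncate Z3sub)" using h asub by blast
  then show False using dsub' by simp
qed

lemma P2: "\<not> (\<exists>\<phi> :: lterm qf. \<forall>A :: int set rl.
              residuated_lattice A \<longrightarrow> (models_univ_l A \<phi> \<longleftrightarrow> dual_functional A))"
proof
  assume "\<exists>\<phi> :: lterm qf. \<forall>A :: int set rl.
              residuated_lattice A \<longrightarrow> (models_univ_l A \<phi> \<longleftrightarrow> dual_functional A)"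
  then obtain \<phi> :: "lterm qf" where h: "\<forall>A :: int set rl.
              residuated_lattice A \<longrightarrow> (models_univ_l A \<phi> \<longleftrightarrow> dual_functional A)" by blast
  have "models_univ_l Z3cx \<phi>" using h rcx dcx by blast
  then have "models_univ_l Z3sub \<phi>" by (rule models_l)
  then have "dual_functional Z3sub" using h rsub by blast
  then show False using dsub by simp
qed

theorem mainTheorem5:
  shows "(\<not> (\<exists>\<phi> :: rterm qf. \<forall>A :: int set ra.
              residuation_algebra A \<longrightarrow> (models_univ_r A \<phi> \<longleftrightarrow> dual_functional A)))
       \<and> (\<not> (\<exists>\<phi> :: lterm qf. \<forall>A :: int set rl.
              residuated_lattice A \<longrightarrow> (models_univ_l A \<phi> \<longleftrightarrow> dual_functional A)))
       \<and> residuated_lattice Z3cx \<and> dual_functional Z3cx \<and> dual_total Z3cx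
       \<and> residuated_lattice Z3sub \<and> \<not> dual_functional Z3sub"
  using P1 P2 rcx rsub dcx dsub by (intro conjI) simp_all

end
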